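(* Let $\mathrm K$ be a field with a discrete valuation $\nu$, residue field $\mathrm k$ and uniformizer $\pi$, and let $\mathrm{Sp}=\mathrm{Sp}_{\nu,\pi}\colon\mathcal A_\bullet(\mathrm K)\to\mathcal A_\bullet(\mathrm k)$. Then for every $(x_0,\dots,x_n)\in\mathcal A_n(\mathrm K)$, $$\Delta\big(\mathrm{Sp}(x_0,\dots,x_n)\big)=\sum_{j\in\mathbb Z/(n+1)}\sum_{i=1}^{n-1}\mathrm{Sp}(x_j,x_{j+1},\dots,x_{j+i})\wedge\mathrm{Sp}(x_j,x_{j+i+1},\dots,x_{j+n}).$$ That is, $\Delta\circ\mathrm{Sp}=(\mathrm{Sp}\wedge\mathrm{Sp})\circ\Delta$.
   Context: For a field $\mathrm F$ and $n\ge1$, let $\mathcal A_n(\mathrm F)$ be the $\mathbb Q$-vector space generated by tuples $(x_0,\dots,x_n)\in\mathrm F^{n+1}$ modulo the relations $(x_0,x_1,\dots,x_n)=(x_1,\dots,x_n,x_0)$ and $(x,\dots,x)=0$. Set $\mathcal A_\bullet=\bigoplus_{n\ge1}\mathcal A_n$. The cobracket $\Delta\colon\mathcal A_\bullet\to\Lambda^2\mathcal A_\bullet$ is $$\Delta(x_0,\dots,x_n)=\sum_{j\in\mathbb Z/(n+1)}\sum_{i=1}^{n-1}(x_j,x_{j+1},\dots,x_{j+i})\wedge(x_j,x_{j+i+1},\dots,x_{j+n}),$$ with indices taken mod $n+1$. Specialization: put $m=\min_j\nu(x_j)$. Then $\mathrm{Sp}_{\nu,\pi}(x_0,\dots,x_n)=(y_0,\dots,y_n)$,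 where $y_i$ is the residue class in $\mathrm k$ of $x_i\pi^{-m}$ if $\nu(x_i)=m$, and $y_i=0$ if $\nu(x_i)>m$. Each sub-tuple on the right-hand side of the claim is specialized using its own minimum valuation. *)

theory Defs
  imports Complex_Main "HOL-Library.Function_Algebras"
begin

definition discrete_valuation :: "('a::field \<Rightarrow> int) \<Rightarrow> bool" where
  "discrete_valuation \<nu> \<longleftrightarrow>
     (\<forall>x y. x \<noteq> 0 \<longrightarrow> y \<noteq> 0 \<longrightarrow> \<nu> (x * y) = \<nu> x + \<nu> y) \<and>
     (\<forall>x y. x \<noteq> 0 \<longrightarrow> y \<noteq> 0 \<longrightarrow> x + y \<noteq> 0 \<longrightarrow> \<nu> (x + y) \<ge> min (\<nu> x) (\<nu> y)) \<and>
     (\<forall>n. \<exists>x. x \<noteq> 0 \<and> \<nu> x = n)"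

definition val_ring :: "('a::field \<Rightarrow> int) \<Rightarrow> 'a set" where
  "val_ring \<nu> = {x. x = 0 \<or> \<nu> x \<ge> 0}"

definition val_ideal :: "('a::field \<Rightarrow> int) \<Rightarrow> 'a set" where
  "val_ideal \<nu> = {x. x = 0 \<or> \<nu> x > 0}"

text \<open>The residue field k = O/m is represented by a field type together with
  a surjective ring homomorphism O \<rightarrow> k with kernel m (values outside O are irrelevant).\<close>
definition residue_map :: "('a::field \<Rightarrow> int) \<Rightarrow> ('a \<Rightarrow> 'b::field) \<Rightarrow> bool" where
  "residue_map \<nu> res \<longleftrightarrow>
     (\<forall>x\<in>val_ring \<nu>. \<forall>y\<in>val_ring \<nu>. res (x + y) = res x + res y \<and> res (x * y) = res x * res y) \<and>
     res 1 = 1 \<and>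
     (\<forall>x\<in>val_ring \<nu>. res x = 0 \<longleftrightarrow> x \<in> val_ideal \<nu>) \<and>
     (\<forall>b. \<exists>x\<in>val_ring \<nu>. res x = b)"

text \<open>m = min of valuations (over nonzero entries); entries of valuation m are
  rescaled by pi^(-m) and reduced, others become 0. The all-zero tuple maps to
  the all-zero tuple.\<close>
definition Sp :: "('a::field \<Rightarrow> int) \<Rightarrow> ('a \<Rightarrow> 'b::field) \<Rightarrow> 'a \<Rightarrow> 'a list \<Rightarrow> 'b list" where
  "Sp \<nu> res \<pi> xs =
     (let m = Min (\<nu> ` {x \<in> set xs. x \<noteq> 0})
      in map (\<lambda>x. if x \<noteq> 0 \<and> \<nu> x = m then res (x * \<pi> powi (- m)) else 0) xs)"

text \<open>Elements of the free Q-vector space on pairs of tuples (finitely supported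
  functions); the class of single a b in the quotient is a \<and> b.\<close>
definition single :: "'b list \<Rightarrow> 'b list \<Rightarrow> ('b list \<times> 'b list \<Rightarrow> rat)" where
  "single a b = (\<lambda>p. if p = (a, b) then 1 else 0)"

text \<open>Relations defining \<Lambda>^2 A_\<bullet> as a quotient of Q[X \<times> X], X = tuples of
  length \<ge> 2 (i.e. n \<ge> 1): cyclic invariance and vanishing of constant tuples in
  each slot, plus antisymmetry.\<close>
inductive_set wedge_rel :: "('b list \<times> 'b list \<Rightarrow> rat) set" where
  zero: "0 \<in> wedge_rel"
| add: "u \<in> wedge_rel \<Longrightarrow> v \<in> wedge_rel \<Longrightarrow> u + v \<in> wedge_rel"
| smult: "u \<in> wedge_rel \<Longrightarrow> (\<lambda>p. c * u p) \<in> wedge_rel"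
| cyc_l: "length a \<ge> 2 \<Longrightarrow> length b \<ge> 2 \<Longrightarrow> single a b - single (rotate1 a) b \<in> wedge_rel"
| cyc_r: "length a \<ge> 2 \<Longrightarrow> length b \<ge> 2 \<Longrightarrow> single a b - single a (rotate1 b) \<in> wedge_rel"
| const_l: "length a \<ge> 2 \<Longrightarrow> length b \<ge> 2 \<Longrightarrow> (\<forall>x\<in>set a. x = hd a) \<Longrightarrow> single a b \<in> wedge_rel"
| const_r: "length a \<ge> 2 \<Longrightarrow> length b \<ge> 2 \<Longrightarrow> (\<forall>x\<in>set b. x = hd b) \<Longrightarrow> single a b \<in> wedge_rel"
| antisym: "length a \<ge> 2 \<Longrightarrow> length b \<ge> 2 \<Longrightarrow> single a b + single b a \<in> wedge_rel"
| alt: "length a \<ge> 2 \<Longrightarrow> single a a \<in> wedge_rel"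

definition wedge_eq :: "('b list \<times> 'b list \<Rightarrow> rat) \<Rightarrow> ('b list \<times> 'b list \<Rightarrow> rat) \<Rightarrow> bool" where
  "wedge_eq u v \<longleftrightarrow> u - v \<in> wedge_rel"

text \<open>For xs = (x_0,...,x_n): the sub-tuples (x_j,...,x_{j+i}) and
  (x_j,x_{j+i+1},...,x_{j+n}), indices mod n+1.\<close>
definition subL :: "'c list \<Rightarrow> nat \<Rightarrow> nat \<Rightarrow> 'c list" where
  "subL xs j i = map (\<lambda>t. xs ! ((j + t) mod length xs)) [0..<i+1]"

definition subR :: "'c list \<Rightarrow> nat \<Rightarrow> nat \<Rightarrow> 'c list" where
  "subR xs j i = xs ! (j mod length xs) # map (\<lambda>t. xs ! ((j + t) mod length xs)) [i+1..<length xs]"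

text \<open>Sum over j in Z/(n+1), i = 1..n-1 of f(subL) \<and> f(subR), where n + 1 = length xs.\<close>
definition cobracket_terms :: "('c list \<Rightarrow> 'b list) \<Rightarrow> 'c list \<Rightarrow> ('b list \<times> 'b list \<Rightarrow> rat)" where
  "cobracket_terms f xs =
     (\<Sum>j<length xs. \<Sum>i\<in>{1..length xs - 2}. single (f (subL xs j i)) (f (subR xs j i)))"

definition cobracket :: "'b list \<Rightarrow> ('b list \<times> 'b list \<Rightarrow> rat)" where
  "cobracket xs = cobracket_terms id xs"

end

theory Submission imports Defs begin

lemma rel_sum: "finite S \<Longrightarrow> (\<And>x. x\<in>S \<Longrightarrow> g x \<in> wedge_rel) \<Longrightarrow> sum g S \<in> wedge_rel"
  by (induction S rule: finite_induct) (auto intro: wedge_rel.intros)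

lemma rel_neg: "u \<in> wedge_rel \<Longrightarrow> -u \<in> wedge_rel"
proof -
  assume "u \<in> wedge_rel"
  then have "(\<lambda>p. (-1) * u p) \<in> wedge_rel" by (rule wedge_rel.smult)
  moreover have "(\<lambda>p. (-1) * u p) = -u" by (auto simp: fun_eq_iff)
  ultimately show ?thesis by simp
qed

lemma rel_diff: "u \<in> wedge_rel \<Longrightarrow> v \<in> wedge_rel \<Longrightarrow> u - v \<in> wedge_rel"
  using wedge_rel.add[OF _ rel_neg[of v], of u] by simp

lemma single_zero_l: "length a \<ge> 2 \<Longrightarrow> length b \<ge> 2 \<Longrightarrow> \<forall>x\<in>set a. x = 0 \<Longrightarrow> single a b \<in> wedge_rel"
  by (rule wedge_rel.const_l) (auto, metis hd_in_set list.size(3) not_numeral_le_zero)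

lemma single_zero_r: "length a \<ge> 2 \<Longrightarrow> length b \<ge> 2 \<Longrightarrow> \<forall>x\<in>set b. x = 0 \<Longrightarrow> single a b \<in> wedge_rel"
  by (rule wedge_rel.const_r) (auto, metis hd_in_set list.size(3) not_numeral_le_zero)

lemma pair_rel: "length A \<ge> 2 \<Longrightarrow> length C \<ge> 2 \<Longrightarrow> single (rotate1 A) C + single C A \<in> wedge_rel"
proof -
  assume a: "length A \<ge> 2" "length C \<ge> 2"
  have "(single C A + single A C) - (single A C - single (rotate1 A) C) \<in> wedge_rel"
    by (rule rel_diff) (auto intro: wedge_rel.antisym wedge_rel.cyc_l a)
  moreover have "(single C A + single A C) - (single A C - single (rotate1 A) C) = single (rotate1 A) C + single C A"
    by (simp add: algebra_simps)
  ultimately show ?thesis by simp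
qed

lemma Sp_rotate1: "Sp \<nu> res \<pi> (rotate1 ys) = rotate1 (Sp \<nu> res \<pi> ys)"
  by (simp add: Sp_def Let_def rotate1_map)

lemma Sp_eq:
  assumes "finite S" "set ys \<subseteq> S" "m = Min (\<nu> ` {x\<in>S. x\<noteq>0})" "\<exists>y\<in>set ys. y\<noteq>0 \<and> \<nu> y = m"
  shows "Sp \<nu> res \<pi> ys = map (\<lambda>x. if x\<noteq>0 \<and> \<nu> x = m then res (x * \<pi> powi (-m)) else 0) ys"
proof -
  have "Min (\<nu> ` {x \<in> set ys. x \<noteq> 0}) = m"
  proof (rule Min_eqI)
    show "finite (\<nu> ` {x \<in> set ys. x \<noteq> 0})" by simp
    fix y assume "y \<in> \<nu> ` {x \<in> set ys. x \<noteq> 0}"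
    then have "y \<in> \<nu> ` {x\<in>S. x\<noteq>0}" using assms(2) by auto
    then show "m \<le> y" using assms(1,3) by simp
  next
    show "m \<in> \<nu> ` {x \<in> set ys. x \<noteq> 0}" using assms(4) by auto
  qed
  then show ?thesis by (simp add: Sp_def Let_def)
qed

lemma map_shift:
  assumes "(a + c) mod N = (b + d) mod (N::nat)"
  shows "map (\<lambda>t. xs ! ((a+t) mod N)) [c..<c+l] = map (\<lambda>t. xs ! ((b+t) mod N)) [d..<d+l]"
proof (rule nth_equalityI)
  fix k assume "k < length (map (\<lambda>t. xs ! ((a+t) mod N)) [c..<c+l])"
  then have k: "k < l" by simp
  have "(a + (c + k)) mod N = (b + (d + k)) mod N"
    using assms by (metis add.assoc mod_add_left_eq)
  then show "map (\<lambda>t. xs ! ((a+t) mod N)) [c..<c+l] ! k = map (\<lambda>t. xs ! ((b+t) mod N)) [d..<d+l] ! k"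
    using k by simp
qed simp


definition Useg :: "'c list \<Rightarrow> nat \<Rightarrow> nat \<Rightarrow> 'c list" where
  "Useg xs j i = map (\<lambda>t. xs ! ((j + t) mod length xs)) [i+1..<length xs]"

lemma idxA:
  assumes "j < length xs" "1 \<le> i" "i + 2 \<le> length xs"
  shows "rotate1 (subR xs ((j+i) mod length xs) (length xs - 1 - i)) = subL xs j i"
proof -
  let ?N = "length xs" let ?p = "(j+i) mod length xs"
  have e: "map (\<lambda>t. xs ! ((?p + t) mod ?N)) [?N-i..<?N-i+i] = map (\<lambda>t. xs ! ((j + t) mod ?N)) [0..<0+i]"
  proof (rule map_shift)
    have "(?p + (?N - i)) mod ?N = (j + i + (?N - i)) mod ?N" by (simp add: mod_add_left_eq)
    also have "j + i + (?N - i) = j + ?N" using assms by simp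
    finally show "(?p + (?N - i)) mod ?N = (j + 0) mod ?N" by simp
  qed
  have "subR xs ?p (?N - 1 - i) = xs ! ?p # map (\<lambda>t. xs ! ((j + t) mod ?N)) [0..<i]"
  proof -
    have "Suc (?N - Suc i) = ?N - i" using assms by simp
    then show ?thesis using e assms by (simp add: subR_def)
  qed
  then show ?thesis using assms by (simp add: subL_def)
qed

lemma idxB:
  assumes "j < length xs" "1 \<le> i" "i + 2 \<le> length xs"
  shows "subL xs ((j+i) mod length xs) (length xs - 1 - i) = xs ! ((j+i) mod length xs) # Useg xs j i"
proof -
  let ?N = "length xs" let ?p = "(j+i) mod length xs"
  have e: "map (\<lambda>t. xs ! ((?p + t) mod ?N)) [1..<1+(?N-i-1)] = map (\<lambda>t. xs ! ((j + t) mod ?N)) [i+1..<(i+1)+(?N-i-1)]"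
    by (rule map_shift) (simp add: mod_Suc_eq)
  have s: "[0..<?N - 1 - i + 1] = 0 # [1..<1+(?N-i-1)]" using assms by (simp add: upt_rec)
  have "(i+1)+(?N-i-1) = ?N" using assms by simp
  then show ?thesis using e s assms by (simp add: subL_def Useg_def)
qed

lemma idxC:
  assumes "j < length xs"
  shows "subR xs j i = xs ! j # Useg xs j i"
  using assms by (simp add: subR_def Useg_def)

lemma idxD:
  assumes "j < length xs" "1 \<le> i" "i + 2 \<le> length xs"
  shows "xs ! j \<in> set (subL xs j i)" "xs ! ((j+i) mod length xs) \<in> set (subL xs j i)"
proof -
  have "xs ! j = (\<lambda>t. xs ! ((j+t) mod length xs)) 0" using assms by simp
  moreover have "(0::nat) \<in> set [0..<i+1]" by auto
  ultimately show "xs ! j \<in> set (subL xs j i)" unfolding subL_def set_map by (rule image_eqI)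
  have "xs ! ((j+i) mod length xs) = (\<lambda>t. xs ! ((j+t) mod length xs)) i" by simp
  moreover have "i \<in> set [0..<i+1]" by auto
  ultimately show "xs ! ((j+i) mod length xs) \<in> set (subL xs j i)" unfolding subL_def set_map by (rule image_eqI)
qed

lemma idxE:
  assumes "j < length xs" "k < length xs"
  shows "xs ! k \<in> set (subL xs j i) \<or> xs ! k \<in> set (Useg xs j i)"
proof -
  let ?N = "length xs"
  define t where "t = (k + ?N - j) mod ?N"
  have N0: "?N > 0" using assms(1) by linarith
  have tN: "t < ?N" using N0 by (simp add: t_def)
  have "(j + t) mod ?N = (j + (k + ?N - j)) mod ?N" by (simp add: t_def mod_add_right_eq)
  also have "j + (k + ?N - j) = k + ?N" using assms by simp
  finally have jt: "(j + t) mod ?N = k" using assms by simp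
  show ?thesis
  proof (cases "t \<le> i")
    case True
    then have t_in: "t \<in> set [0..<i+1]" by auto
    have "xs ! k \<in> (\<lambda>t. xs ! ((j + t) mod ?N)) ` set [0..<i+1]"
      by (rule image_eqI[OF _ t_in]) (simp add: jt)
    then show ?thesis by (simp add: subL_def)
  next
    case False
    then have t_in: "t \<in> set [i+1..<?N]" using tN by auto
    have "xs ! k \<in> (\<lambda>t. xs ! ((j + t) mod ?N)) ` set [i+1..<?N]"
      by (rule image_eqI[OF _ t_in]) (simp add: jt)
    then show ?thesis by (simp add: Useg_def)
  qed
qed

lemma idxF:
  assumes "0 < length xs"
  shows "set (subL xs j i) \<subseteq> set xs" "set (subR xs j i) \<subseteq> set xs" "set (Useg xs j i) \<subseteq> set xs"
  using assms by (auto simp: subL_def subR_def Useg_def)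

lemma idx_len:
  shows "length (subL xs j i) = i + 1" "length (subR xs j i) = 1 + (length xs - (i+1))"
  by (auto simp: subL_def subR_def)


theorem lemma2p1:
  fixes \<nu> :: "'a::field \<Rightarrow> int" and res :: "'a \<Rightarrow> 'b::field" and \<pi> :: 'a
    and xs :: "'a list"
  assumes "discrete_valuation \<nu>"
    and "residue_map \<nu> res"
    and "\<pi> \<noteq> 0" and "\<nu> \<pi> = 1"
    and "length xs \<ge> 2"
  shows "wedge_eq (cobracket (Sp \<nu> res \<pi> xs)) (cobracket_terms (Sp \<nu> res \<pi>) xs)"
proof -
  define N where "N = length xs"
  have N2: "N \<ge> 2" using assms(5) N_def by simp
  define m where "m = Min (\<nu> ` {x \<in> set xs. x \<noteq> 0})"
  define f where "f = (\<lambda>x. if x \<noteq> 0 \<and> \<nu> x = m then res (x * \<pi> powi (- m)) else 0)"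
  define P where "P = (\<lambda>ys. \<exists>y\<in>set ys. y \<noteq> 0 \<and> \<nu> y = m)"
  define I where "I = {..<N} \<times> {1..N-2}"
  define T1 where "T1 = (\<lambda>(j,i). single (map f (subL xs j i)) (map f (subR xs j i)))"
  define T2 where "T2 = (\<lambda>(j,i). single (Sp \<nu> res \<pi> (subL xs j i)) (Sp \<nu> res \<pi> (subR xs j i)))"
  have Spxs: "Sp \<nu> res \<pi> xs = map f xs" by (simp add: Sp_def m_def f_def Let_def)
  have pos: "x mod length xs < length xs" for x using assms(5) by (intro mod_less_divisor) linarith
  have sL: "subL (map f xs) j i = map f (subL xs j i)" for j i
    by (simp add: subL_def pos)
  have sR: "subR (map f xs) j i = map f (subR xs j i)" for j i
    by (simp add: subR_def pos)
  have LHS: "cobracket (Sp \<nu> res \<pi> xs) = sum T1 I"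
    unfolding cobracket_def cobracket_terms_def Spxs I_def T1_def
    by (simp add: sL sR sum.cartesian_product N_def)
  have RHS: "cobracket_terms (Sp \<nu> res \<pi>) xs = sum T2 I"
    unfolding cobracket_terms_def I_def T2_def
    by (simp add: sum.cartesian_product N_def)
  have finI: "finite I" by (simp add: I_def)
  have lens: "length (subL xs j i) \<ge> 2" "length (subR xs j i) \<ge> 2" if "(j,i) \<in> I" for j i
    using that N2 by (auto simp: I_def idx_len N_def)
  have subs: "set (subL xs j i) \<subseteq> set xs" "set (subR xs j i) \<subseteq> set xs" "set (Useg xs j i) \<subseteq> set xs" for j i
  proof -
    have ne: "0 < length xs" using assms(5) by linarith
    show "set (subL xs j i) \<subseteq> set xs" "set (subR xs j i) \<subseteq> set xs" "set (Useg xs j i) \<subseteq> set xs"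
      using idxF[OF ne] by auto
  qed
  have goal: "sum T1 I - sum T2 I \<in> wedge_rel"
  proof (cases "\<exists>k<N. xs ! k \<noteq> 0 \<and> \<nu> (xs ! k) = m")
    case False
    have allz: "\<forall>y\<in>set xs. y = 0"
    proof (rule ccontr)
      assume "\<not> (\<forall>y\<in>set xs. y = 0)"
      then have ne: "{x \<in> set xs. x \<noteq> 0} \<noteq> {}" by auto
      have "m \<in> \<nu> ` {x \<in> set xs. x \<noteq> 0}" unfolding m_def using ne by (intro Min_in) auto
      then obtain y where "y \<in> set xs" "y \<noteq> 0" "\<nu> y = m" by auto
      then show False using False by (auto simp: in_set_conv_nth N_def)
    qed
    have z: "(\<forall>x\<in>set (map f ys). x = 0) \<and> (\<forall>x\<in>set (Sp \<nu> res \<pi> ys). x = 0)" if "set ys \<subseteq> set xs" for ys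
      using that allz by (auto simp: f_def Sp_def Let_def)
    have "sum T1 I \<in> wedge_rel"
    proof (rule rel_sum[OF finI])
      fix a assume "a \<in> I"
      then obtain j i where a: "a = (j,i)" "(j,i) \<in> I" by (cases a) auto
      show "T1 a \<in> wedge_rel" unfolding a T1_def
        by (simp, rule single_zero_l) (use lens[OF a(2)] z[OF subs(1)] in auto)
    qed
    moreover have "sum T2 I \<in> wedge_rel"
    proof (rule rel_sum[OF finI])
      fix a assume "a \<in> I"
      then obtain j i where a: "a = (j,i)" "(j,i) \<in> I" by (cases a) auto
      show "T2 a \<in> wedge_rel" unfolding a T2_def
        by (simp, rule single_zero_l) (use lens[OF a(2)] z[OF subs(1)] in \<open>auto simp: Sp_def Let_def\<close>)
    qed
    ultimately show ?thesis by (rule rel_diff)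
  next
    case True
    then obtain k where k: "k < N" "xs ! k \<noteq> 0" "\<nu> (xs ! k) = m" by auto
    have Psp: "Sp \<nu> res \<pi> ys = map f ys" if "set ys \<subseteq> set xs" "P ys" for ys
      using Sp_eq[of "set xs" ys m \<nu> res \<pi>] that by (simp add: m_def f_def P_def)
    have nP: "\<forall>x\<in>set (map f ys). x = 0" if "\<not> P ys" for ys
      using that by (auto simp: f_def P_def)
    have nPx: "f x = 0" if "x \<in> set ys" "\<not> P ys" for x ys
      using that by (auto simp: f_def P_def)
    have cover: "P (subL xs j i) \<or> P (Useg xs j i)" if "j < N" for j i
      using idxE[of j xs k i] that k by (auto simp: P_def N_def)
    have PU: "P ys" if "set U \<subseteq> set ys" "P U" for U ys
      using that by (auto simp: P_def)
    define \<sigma> where "\<sigma> = (\<lambda>(j::nat,i::nat). ((j+i) mod N, N-1-i))"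
    define \<tau> where "\<tau> = (\<lambda>(j::nat,i::nat). ((j+i+1) mod N, N-1-i))"
    define BL where "BL = {(j,i). (j,i) \<in> I \<and> \<not> P (subL xs j i)}"
    define BR where "BR = {(j,i). (j,i) \<in> I \<and> P (subL xs j i) \<and> \<not> P (subR xs j i)}"
    define B where "B = BL \<union> BR"
    have BI: "B \<subseteq> I" by (auto simp: B_def BL_def BR_def)
    have finBL: "finite BL" using finI by (auto simp: BL_def intro: finite_subset)
    have finBR: "finite BR" using finI by (auto simp: BR_def intro: finite_subset)
    have disj: "BL \<inter> BR = {}" by (auto simp: BL_def BR_def)
    have sI: "\<sigma> (j,i) \<in> I" "\<tau> (j,i) \<in> I" if "(j,i) \<in> I" for j i
      using that N2 by (auto simp: I_def \<sigma>_def \<tau>_def)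
    have ts: "\<tau> (\<sigma> (j,i)) = (j,i)" if "(j,i) \<in> I" for j i
    proof -
      have j: "j < N" "i + 2 \<le> N" "1 \<le> i" using that by (auto simp: I_def)
      have "((j+i) mod N + (N-1-i) + 1) mod N = ((j+i) + (N-1-i) + 1) mod N"
        by (metis add.assoc mod_add_left_eq)
      also have "(j+i) + (N-1-i) + 1 = j + N" using j by simp
      finally show ?thesis using j by (simp add: \<sigma>_def \<tau>_def)
    qed
    have st: "\<sigma> (\<tau> (j,i)) = (j,i)" if "(j,i) \<in> I" for j i
    proof -
      have j: "j < N" "i + 2 \<le> N" "1 \<le> i" using that by (auto simp: I_def)
      have "((j+i+1) mod N + (N-1-i)) mod N = ((j+i+1) + (N-1-i)) mod N"
        by (metis mod_add_left_eq)
      also have "(j+i+1) + (N-1-i) = j + N" using j by simp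
      finally show ?thesis using j by (simp add: \<sigma>_def \<tau>_def)
    qed
    have sA: "rotate1 (subR xs (fst (\<sigma> (j,i))) (snd (\<sigma> (j,i)))) = subL xs j i"
      and sB: "subL xs (fst (\<sigma> (j,i))) (snd (\<sigma> (j,i))) = xs ! ((j+i) mod N) # Useg xs j i"
      if "(j,i) \<in> I" for j i
      using idxA[of j xs i] idxB[of j xs i] that by (auto simp: I_def \<sigma>_def N_def)
    have D: "T1 a - T2 a = (if a \<in> B then T1 a else 0) - (if a \<in> B then T2 a else 0)" if "a \<in> I" for a
    proof -
      obtain j i where a: "a = (j,i)" by (cases a)
      show ?thesis
      proof (cases "a \<in> B")
        case False
        then have "P (subL xs j i)" "P (subR xs j i)" using that a by (auto simp: B_def BL_def BR_def)
        then show ?thesis using False by (simp add: a T1_def T2_def Psp subs)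
      qed simp
    qed
    have "sum T1 I - sum T2 I = sum (\<lambda>a. T1 a - T2 a) I" by (simp add: sum_subtractf)
    also have "\<dots> = sum (\<lambda>a. (if a \<in> B then T1 a else 0) - (if a \<in> B then T2 a else 0)) I"
      using D by (intro sum.cong) auto
    also have "\<dots> = sum T1 B - sum T2 B"
      using BI finI sum.inter_restrict[OF finI, of T1 B, symmetric] sum.inter_restrict[OF finI, of T2 B, symmetric]
      by (simp add: sum_subtractf Int_absorb1)
    finally have eq: "sum T1 I - sum T2 I = sum T1 B - sum T2 B" .
    have T1B: "sum T1 B \<in> wedge_rel"
    proof (rule rel_sum)
      show "finite B" using finBL finBR by (simp add: B_def)
      fix a assume "a \<in> B"
      then obtain j i where a: "a = (j,i)" "(j,i) \<in> I" and
        c: "\<not> P (subL xs j i) \<or> \<not> P (subR xs j i)" by (auto simp: B_def BL_def BR_def)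
      have l1: "length (map f (subL xs j i)) \<ge> 2" "length (map f (subR xs j i)) \<ge> 2"
        using lens[OF a(2)] by auto
      show "T1 a \<in> wedge_rel"
      proof (cases "P (subL xs j i)")
        case True
        then have "\<not> P (subR xs j i)" using c by auto
        then show ?thesis unfolding a T1_def using single_zero_r[OF l1 nP] by simp
      next
        case False
        then show ?thesis unfolding a T1_def using single_zero_l[OF l1 nP] by simp
      qed
    qed
    have reidx: "sum T2 BR = sum (\<lambda>a. T2 (\<sigma> a)) BL"
    proof (rule sym, rule sum.reindex_bij_witness[where j=\<sigma> and i=\<tau>])
      fix a assume "a \<in> BL"
      then obtain j i where a: "a = (j,i)" "(j,i) \<in> I" and nl: "\<not> P (subL xs j i)"
        by (auto simp: BL_def)
      show "\<tau> (\<sigma> a) = a" using ts a by simp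
      have jN: "j < N" using a by (auto simp: I_def)
      have PU1: "P (Useg xs j i)" using cover[OF jN] nl by auto
      obtain j' i' where s: "\<sigma> (j,i) = (j',i')" by (cases "\<sigma> (j,i)")
      have "(j',i') \<in> I" using sI a s by metis
      moreover have "P (subL xs j' i')" using sB[OF a(2)] s PU[OF _ PU1, of "xs ! ((j + i) mod N) # Useg xs j i"] by auto
      moreover have "\<not> P (subR xs j' i')" using sA[OF a(2)] s nl
        by (metis P_def fst_conv snd_conv set_rotate1)
      ultimately show "\<sigma> a \<in> BR" using a s by (simp add: BR_def)
    next
      fix b assume "b \<in> BR"
      then obtain j i where b: "b = (j,i)" "(j,i) \<in> I" and nr: "\<not> P (subR xs j i)"
        by (auto simp: BR_def)
      show "\<sigma> (\<tau> b) = b" using st b by simp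
      obtain j' i' where s: "\<tau> (j,i) = (j',i')" by (cases "\<tau> (j,i)")
      have I': "(j',i') \<in> I" using sI b s by metis
      have ss: "\<sigma> (j',i') = (j,i)" using st[OF b(2)] s by simp
      have "\<not> P (subL xs j' i')" using sA[OF I'] ss nr
        by (metis P_def fst_conv snd_conv set_rotate1)
      then show "\<tau> b \<in> BL" using I' b s by (simp add: BL_def)
    qed simp
    have T2B: "sum T2 B \<in> wedge_rel"
    proof -
      have "sum T2 B = sum T2 BL + sum T2 BR"
        using finBL finBR disj by (simp add: B_def sum.union_disjoint)
      also have "\<dots> = sum (\<lambda>a. T2 a + T2 (\<sigma> a)) BL" by (simp add: reidx sum.distrib)
      finally have e: "sum T2 B = sum (\<lambda>a. T2 a + T2 (\<sigma> a)) BL" .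
      have "sum (\<lambda>a. T2 a + T2 (\<sigma> a)) BL \<in> wedge_rel"
      proof (rule rel_sum[OF finBL])
        fix a assume "a \<in> BL"
        then obtain j i where a: "a = (j,i)" "(j,i) \<in> I" and nl: "\<not> P (subL xs j i)"
          by (auto simp: BL_def)
        have jN: "j < N" and ii: "1 \<le> i" "i + 2 \<le> N" using a by (auto simp: I_def)
        have PU1: "P (Useg xs j i)" using cover[OF jN] nl by auto
        obtain j' i' where s: "\<sigma> (j,i) = (j',i')" by (cases "\<sigma> (j,i)")
        have I': "(j',i') \<in> I" using sI a s by metis
        define U where "U = Useg xs j i"
        define A where "A = Sp \<nu> res \<pi> (subR xs j' i')"
        define C where "C = 0 # map f U"
        have xj: "f (xs ! j) = 0" using idxD(1)[of j xs i] jN ii nl nPx by (auto simp: N_def)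
        have xp: "f (xs ! ((j+i) mod N)) = 0" using idxD(2)[of j xs i] jN ii nl nPx by (auto simp: N_def)
        have R: "subR xs j i = xs ! j # U" using idxC[of j xs i] jN by (simp add: N_def U_def)
        have SR: "Sp \<nu> res \<pi> (subR xs j i) = C"
        proof -
          have "P (subR xs j i)" using PU[OF _ PU1, of "subR xs j i"] R by (auto simp: U_def)
          then have "Sp \<nu> res \<pi> (subR xs j i) = map f (subR xs j i)" by (rule Psp[OF subs(2)])
          then show ?thesis using R xj by (simp add: C_def)
        qed
        have L': "subL xs j' i' = xs ! ((j+i) mod N) # U" using sB[OF a(2)] s by (simp add: U_def)
        have SL': "Sp \<nu> res \<pi> (subL xs j' i') = C"
        proof -
          have "P (subL xs j' i')" using PU[OF _ PU1, of "subL xs j' i'"] L' by (auto simp: U_def)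
          then have "Sp \<nu> res \<pi> (subL xs j' i') = map f (subL xs j' i')" by (rule Psp[OF subs(1)])
          then show ?thesis using L' xp by (simp add: C_def)
        qed
        have SL: "Sp \<nu> res \<pi> (subL xs j i) = rotate1 A"
          using sA[OF a(2)] s by (simp add: A_def flip: Sp_rotate1)
        have lA: "length A \<ge> 2" using lens(2)[OF I'] by (simp add: A_def Sp_def Let_def)
        have lC: "length C \<ge> 2" using lens(2)[OF a(2)] arg_cong[OF SR, of length] by (simp add: Sp_def Let_def)
        show "T2 a + T2 (\<sigma> a) \<in> wedge_rel"
          using pair_rel[OF lA lC] a s SL SR SL' by (simp add: T2_def A_def)
      qed
      then show ?thesis using e by simp
    qed
    show ?thesis using eq T1B T2B rel_diff by simp
  qed
  have fin: "cobracket (Sp \<nu> res \<pi> xs) - cobracket_terms (Sp \<nu> res \<pi>) xs \<in> wedge_rel"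
    by (subst LHS, subst RHS, rule goal)
  then show ?thesis by (simp only: wedge_eq_def)
qed

end
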